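(* Let $\lambda$ be an infinite cardinal and let $B_\lambda$ carry any Hausdorff topology making it a topological semigroup. Let $S$ be a topological semigroup such that $S\times S$ is countably compact. Then every continuous homomorphism $h\colon B_\lambda\to S$ is annihilating, i.e. $(s)h=(t)h$ for all $s,t\in B_\lambda$.
   Context: A topological semigroup is a Hausdorff space with a continuous associative multiplication. For a nonzero cardinal $\lambda$, the semigroup of $\lambda\times\lambda$-matrix units is $B_\lambda=(\lambda\times\lambda)\cup\{0\}$ with $(a,b)\cdot(c,d)=(a,d)$ if $b=c$, $(a,b)\cdot(c,d)=0$ if $b\neq c$, and $0$ a zero element. A homomorphism $h\colon S\to T$ is annihilating if it is constant. *)

theory Defs
  imports "HOL-Analysis.Analysis"
begin

definition countably_compact_space :: "'a topology \<Rightarrow> bool" where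
  "countably_compact_space X \<longleftrightarrow>
     (\<forall>\<U>. countable \<U> \<and> (\<forall>U\<in>\<U>. openin X U) \<and> topspace X \<subseteq> \<Union>\<U> \<longrightarrow>
        (\<exists>\<F>. finite \<F> \<and> \<F> \<subseteq> \<U> \<and> topspace X \<subseteq> \<Union>\<F>))"

definition topological_semigroup :: "'a topology \<Rightarrow> ('a \<Rightarrow> 'a \<Rightarrow> 'a) \<Rightarrow> bool" where
  "topological_semigroup X m \<longleftrightarrow>
     Hausdorff_space X \<and>
     (\<forall>x\<in>topspace X. \<forall>y\<in>topspace X. m x y \<in> topspace X) \<and>
     (\<forall>x\<in>topspace X. \<forall>y\<in>topspace X. \<forall>z\<in>topspace X. m (m x y) z = m x (m y z)) \<and>
     continuous_map (prod_topology X X) X (\<lambda>(x, y). m x y)"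

text \<open>The semigroup of \<lambda>\<times>\<lambda>-matrix units over an index set L:
  carrier is Some ` (L \<times> L) together with None (the zero).\<close>
definition B_carrier :: "'a set \<Rightarrow> ('a \<times> 'a) option set" where
  "B_carrier L = Some ` (L \<times> L) \<union> {None}"

fun B_mult :: "('a \<times> 'a) option \<Rightarrow> ('a \<times> 'a) option \<Rightarrow> ('a \<times> 'a) option" where
  "B_mult (Some (a, b)) (Some (c, d)) = (if b = c then Some (a, d) else None)"
| "B_mult _ _ = None"

definition semigroup_hom :: "'a set \<Rightarrow> ('a \<Rightarrow> 'a \<Rightarrow> 'a) \<Rightarrow> 'b set \<Rightarrow> ('b \<Rightarrow> 'b \<Rightarrow> 'b)
    \<Rightarrow> ('a \<Rightarrow> 'b) \<Rightarrow> bool" where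
  "semigroup_hom A mA B mB h \<longleftrightarrow>
     (\<forall>x\<in>A. h x \<in> B) \<and> (\<forall>x\<in>A. \<forall>y\<in>A. h (mA x y) = mB (h x) (h y))"

end

theory Submission
  imports Defs
begin

lemma cc_cluster:
  fixes z :: "nat \<Rightarrow> 'a"
  assumes cc: "countably_compact_space X" and z: "\<And>n. z n \<in> topspace X"
  shows "\<exists>w\<in>topspace X. \<forall>k. w \<in> X closure_of (z ` {k..})"
proof (rule ccontr)
  assume H: "\<not> ?thesis"
  define U where "U k = topspace X - X closure_of (z ` {k..})" for k :: nat
  have op: "\<forall>V\<in>range U. openin X V" unfolding U_def by auto
  have cov: "topspace X \<subseteq> \<Union>(range U)" using H unfolding U_def by auto
  obtain F where F: "finite F" "F \<subseteq> range U" "topspace X \<subseteq> \<Union>F"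
    using cc op cov unfolding countably_compact_space_def by (metis countable_image countableI_type)
  obtain I where I: "finite I" "F = U ` I" using finite_subset_image[OF F(1) F(2)] by blast
  define K where "K = Max (insert 0 I)"
  have mono: "U i \<subseteq> U K" if "i \<in> I" for i
  proof -
    have "i \<le> K" unfolding K_def using I(1) that by simp
    then have "z ` {K..} \<subseteq> z ` {i..}" by auto
    then have "X closure_of (z ` {K..}) \<subseteq> X closure_of (z ` {i..})" by (rule closure_of_mono)
    then show ?thesis unfolding U_def by auto
  qed
  have "z K \<in> X closure_of (z ` {K..})"
    using closure_of_subset[of "z ` {K..}" X] z by auto
  moreover have "z K \<in> \<Union>F" using F(3) z by auto
  ultimately show False using mono I(2) unfolding U_def by auto
qed

theorem theorem6:
  fixes L :: "'a set"
    and \<tau> :: "('a \<times> 'a) option topology"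
    and T :: "'b topology"
    and m :: "'b \<Rightarrow> 'b \<Rightarrow> 'b"
    and h :: "('a \<times> 'a) option \<Rightarrow> 'b"
  assumes "infinite L"
    and "topspace \<tau> = B_carrier L"
    and "topological_semigroup \<tau> B_mult"
    and "topological_semigroup T m"
    and "countably_compact_space (prod_topology T T)"
    and "continuous_map \<tau> T h"
    and "semigroup_hom (B_carrier L) B_mult (topspace T) m h"
  shows "\<forall>s\<in>B_carrier L. \<forall>t\<in>B_carrier L. h s = h t"
proof (rule ccontr)
  assume NC: "\<not> ?thesis"
  have hT: "\<And>x. x \<in> B_carrier L \<Longrightarrow> h x \<in> topspace T"
   and hm: "\<And>x y. x \<in> B_carrier L \<Longrightarrow> y \<in> B_carrier L \<Longrightarrow> h (B_mult x y) = m (h x) (h y)"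
    using assms(7) unfolding semigroup_hom_def by auto
  have BS: "Some (c, d) \<in> B_carrier L" if "c \<in> L" "d \<in> L" for c d
    using that unfolding B_carrier_def by auto
  have BN: "None \<in> B_carrier L" unfolding B_carrier_def by auto
  obtain a :: "nat \<Rightarrow> 'a" where a: "inj a" "range a \<subseteq> L"
    using infinite_countable_subset[OF assms(1)] by blast
  have aL: "a n \<in> L" for n using a by auto
  define e where "e = h (Some (a 0, a 0))"
  define z0 where "z0 = h None"
  have ez: "e \<noteq> z0"
  proof
    assume ez: "e = z0"
    have all: "h (Some (c, d)) = z0" if "c \<in> L" "d \<in> L" for c d
    proof -
      have "h (Some (c, d)) = h (B_mult (B_mult (Some (c, a 0)) (Some (a 0, a 0))) (Some (a 0, d)))"
        by simp
      also have "\<dots> = m (m (h (Some (c, a 0))) e) (h (Some (a 0, d)))"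
        using hm BS that aL unfolding e_def by (metis B_mult.simps(1))
      also have "\<dots> = m (m (h (Some (c, a 0))) (h None)) (h (Some (a 0, d)))"
        using ez z0_def by simp
      also have "\<dots> = h (B_mult (B_mult (Some (c, a 0)) None) (Some (a 0, d)))"
      proof -
        have "B_mult (Some (c, a 0)) None \<in> B_carrier L" using BN by simp
        then show ?thesis using hm BS BN that aL by metis
      qed
      finally show ?thesis unfolding z0_def by simp
    qed
    have "\<forall>s\<in>B_carrier L. h s = z0"
      using all unfolding B_carrier_def z0_def by auto
    then show False using NC by auto
  qed
  define x where "x n = h (Some (a 0, a (Suc n)))" for n
  define y where "y n = h (Some (a (Suc n), a 0))" for n
  have xT: "x n \<in> topspace T" for n unfolding x_def using hT BS aL by auto
  have yT: "y n \<in> topspace T" for n unfolding y_def using hT BS aL by auto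
  have xy: "m (x n) (y n) = e" for n
  proof -
    have "m (x n) (y n) = h (B_mult (Some (a 0, a (Suc n))) (Some (a (Suc n), a 0)))"
      unfolding x_def y_def using hm BS aL by metis
    then show ?thesis unfolding e_def by simp
  qed
  have xy0: "m (x n) (y k) = z0" if "n \<noteq> k" for n k
  proof -
    have "m (x n) (y k) = h (B_mult (Some (a 0, a (Suc n))) (Some (a (Suc k), a 0)))"
      unfolding x_def y_def using hm BS aL by metis
    moreover have "a (Suc n) \<noteq> a (Suc k)" using a(1) that by (auto dest: injD)
    ultimately show ?thesis unfolding z0_def by simp
  qed
  have TS: "Hausdorff_space T" and mT: "\<And>u v. u \<in> topspace T \<Longrightarrow> v \<in> topspace T \<Longrightarrow> m u v \<in> topspace T"
    and mc: "continuous_map (prod_topology T T) T (\<lambda>(u, v). m u v)"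
    using assms(4) unfolding topological_semigroup_def by auto
  have eT: "e \<in> topspace T" unfolding e_def using hT BS aL by auto
  have z0T: "z0 \<in> topspace T" unfolding z0_def using hT BN by auto
  obtain w where w: "w \<in> topspace (prod_topology T T)"
    "\<And>k. w \<in> (prod_topology T T) closure_of ((\<lambda>n. (x n, y n)) ` {k..})"
    using cc_cluster[OF assms(5), of "\<lambda>n. (x n, y n)"] xT yT by auto
  obtain p q where pq: "w = (p, q)" by (cases w)
  have pT: "p \<in> topspace T" and qT: "q \<in> topspace T" using w(1) pq by auto
  have C1: "closedin (prod_topology T T) {u \<in> topspace (prod_topology T T). (\<lambda>(u, v). m u v) u \<in> {e}}"
    by (rule closedin_continuous_map_preimage[OF mc closedin_Hausdorff_singleton[OF TS eT]])
  have "(prod_topology T T) closure_of ((\<lambda>n. (x n, y n)) ` {0..})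
        \<subseteq> {u \<in> topspace (prod_topology T T). (\<lambda>(u, v). m u v) u \<in> {e}}"
    by (rule closure_of_minimal[OF _ C1]) (use xT yT xy in auto)
  then have pqe: "m p q = e" using w(2)[of 0] pq by auto
  have py: "m p (y k) = z0" for k
  proof -
    have cm: "continuous_map T T (\<lambda>u. m u (y k))"
    proof -
      have "continuous_map T (prod_topology T T) (\<lambda>u. (u, y k))"
        by (intro continuous_map_pairedI continuous_map_id continuous_map_const[THEN iffD2]) (use yT in auto)
      from continuous_map_compose[OF this mc] show ?thesis by (simp add: o_def)
    qed
    have C: "closedin T {u \<in> topspace T. m u (y k) \<in> {z0}}"
      by (rule closedin_continuous_map_preimage[OF cm closedin_Hausdorff_singleton[OF TS z0T]])
    have "fst ` ((prod_topology T T) closure_of ((\<lambda>n. (x n, y n)) ` {Suc k..}))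
          \<subseteq> T closure_of (fst ` ((\<lambda>n. (x n, y n)) ` {Suc k..}))"
      by (rule continuous_map_image_closure_subset[OF continuous_map_fst])
    also have "\<dots> \<subseteq> {u \<in> topspace T. m u (y k) \<in> {z0}}"
      by (rule closure_of_minimal[OF _ C]) (use xT xy0 in auto)
    finally show ?thesis using w(2)[of "Suc k"] pq by force
  qed
  have cm2: "continuous_map T T (\<lambda>v. m p v)"
  proof -
    have "continuous_map T (prod_topology T T) (\<lambda>v. (p, v))"
      by (intro continuous_map_pairedI continuous_map_id continuous_map_const[THEN iffD2]) (use pT in auto)
    from continuous_map_compose[OF this mc] show ?thesis by (simp add: o_def)
  qed
  have C2: "closedin T {v \<in> topspace T. m p v \<in> {z0}}"
    by (rule closedin_continuous_map_preimage[OF cm2 closedin_Hausdorff_singleton[OF TS z0T]])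
  have "snd ` ((prod_topology T T) closure_of ((\<lambda>n. (x n, y n)) ` {0..}))
        \<subseteq> T closure_of (snd ` ((\<lambda>n. (x n, y n)) ` {0..}))"
    by (rule continuous_map_image_closure_subset[OF continuous_map_snd])
  also have "\<dots> \<subseteq> {v \<in> topspace T. m p v \<in> {z0}}"
    by (rule closure_of_minimal[OF _ C2]) (use yT py in auto)
  finally have "m p q = z0" using w(2)[of 0] pq by force
  with pqe ez show False by simp
qed

end
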